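(* Fix $\epsilon\in(0,1/4)$ and $\mathscr A=(a,b,c,d)\in\mathbb{R}^4$ with $|c|\le\epsilon$, $|d|\le\epsilon$. Then: (1) $\sigma_{\mathscr A}$ commutes with $\tau_{\mathscr A}\sigma_{\mathscr A}^{-1}\tau_{\mathscr A}^{-1}$; (2) $\sigma'_{\mathscr A}$ commutes with $\tau'^{-1}_{\mathscr A}\sigma'^{-1}_{\mathscr A}\tau'_{\mathscr A}$; (3) $\sigma_{\mathscr A}$ commutes with $\tau'_{\mathscr A}$, and $\sigma'_{\mathscr A}$ commutes with $\tau_{\mathscr A}$.
   Context: Let $p\colon\mathbb{R}^2\to\mathbb{R}^2/\mathbb{Z}^2$ be the projection, $D_\epsilon=[0,1]^2\setminus[2\epsilon,1-2\epsilon]^2$, $P_\epsilon=p(D_\epsilon)$ (a once-punctured torus) with $\omega_0=dx\wedge dy$. Hamiltonian vector fields: $\omega_0(X_H,\cdot)=-dH$; $\varphi^t_H$ is the time-$t$ flow of an autonomous $H$. $Y_c$, $Y'_d$ are compactly supported vector fields on $P_\epsilon$ with $\mathcal L_{Y_c}\omega_0=\mathcal L_{Y'_d}\omega_0=0$, $Y_c=c\,\partial_x$ at $p(x,y)$ for $(x,y)\in([-\epsilon,\epsilon]\times\mathbb{R})\cup(\mathbb{R}\times[-\epsilon,\epsilon])$, and $Y'_d=-d\,\partial_y$ on the same set. $\tau_{\mathscr A}$, $\tau'_{\mathscr A}$ are the time-one maps of $Y_c$, $Y'_d$. For $0<r\le|q|\le\epsilon$: $I_{q,r}=(\frac{q-r}2,\frac{q+r}2)$,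 $J_{q,r}=[-\frac{|q|-r}2,\frac{|q|-r}2]$; $\rho_{q,r}\colon[-\epsilon,\epsilon]\to[-1,1]$ is smooth with $\mathrm{supp}\,\rho_{q,r}\subset(-\frac{|q|+r}2,\frac{|q|+r}2)$, $\rho_{q,r}(x)+\rho_{q,r}(x+q)=q/|q|$ for $x\in I_{-q,r}$, and $\rho_{q,r}=q/|q|$ on $J_{q,r}$. $H_{q,r}$ (resp. $H'_{q,r}$) is the function on $P_\epsilon$ induced by $(x,y)\mapsto-\rho_{q,r}(x)$ for $|x|\le\epsilon$, $0$ for $\epsilon<|x|\le1/2$ (resp. the same with $y$ in place of $x$). Let $\Delta=\min\{|c|,|d|\}$ if $c\ne0\ne d$, else $\Delta=\max\{|c|,|d|\}$. Define $\sigma^t_{\mathscr A}=\varphi^{bt}_{H_{c,\Delta}}$ on $p(I_{-c,\Delta}\times\mathbb{R})$ and the identity elsewhere; $\sigma'^t_{\mathscr A}=\varphi^{at}_{H'_{d,\Delta}}$ on $p(\mathbb{R}\times I_{-d,\Delta})$ and the identity elsewhere; $\sigma_{\mathscr A}=\sigma^1_{\mathscr A}$, $\sigma'_{\mathscr A}=\sigma'^1_{\mathscr A}$. Convention: if $c=0$ the pair $(c,\Delta)$ in the definition of $\sigma_{\mathscr A}$ is replaced by $(\epsilon,\epsilon)$ (so the region is $p(I_{-\epsilon,\epsilon}\times\mathbb R)$ and the function is $H_{\epsilon,\epsilon}$), and similarly if $d=0$ for $\sigma'_{\mathscr A}$. These are compactly supported symplectomorphisms of $(P_\epsilon,\omega_0)$.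 *)

theory Defs
  imports "HOL-Analysis.Analysis"
begin

(* Points of the torus R^2/Z^2 are represented by their lifts in R^2 = real \<times> real;
   maps/vector fields on the torus are represented by their (Z^2-equivariant / periodic) lifts. *)

definition in_Z2 :: "real \<times> real \<Rightarrow> bool" where
  "in_Z2 v \<longleftrightarrow> fst v \<in> \<int> \<and> snd v \<in> \<int>"

definition torus_eq :: "real \<times> real \<Rightarrow> real \<times> real \<Rightarrow> bool" where
  "torus_eq u v \<longleftrightarrow> in_Z2 (u - v)"

definition commutes_T :: "(real \<times> real \<Rightarrow> real \<times> real) \<Rightarrow> (real \<times> real \<Rightarrow> real \<times> real) \<Rightarrow> bool" where
  "commutes_T f g \<longleftrightarrow> (\<forall>v. torus_eq (f (g v)) (g (f v)))"

definition periodic2 :: "(real \<times> real \<Rightarrow> 'b) \<Rightarrow> bool" where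
  "periodic2 F \<longleftrightarrow> (\<forall>v k. in_Z2 k \<longrightarrow> F (v + k) = F v)"

fun Ck :: "nat \<Rightarrow> ('a::real_normed_vector \<Rightarrow> 'b::real_normed_vector) \<Rightarrow> bool" where
  "Ck 0 f = continuous_on UNIV f"
| "Ck (Suc n) f = (\<exists>f'. (\<forall>x. (f has_derivative f' x) (at x)) \<and> (\<forall>u. Ck n (\<lambda>x. f' x u)))"

definition smooth :: "('a::real_normed_vector \<Rightarrow> 'b::real_normed_vector) \<Rightarrow> bool" where
  "smooth f \<longleftrightarrow> (\<forall>n. Ck n f)"

(* preimage p^{-1}(P_eps) of the punctured torus P_eps = p([0,1]^2 - [2eps,1-2eps]^2) *)
definition P_lift :: "real \<Rightarrow> (real \<times> real) set" where
  "P_lift \<epsilon> = {v. \<not> (\<exists>k. in_Z2 k \<and> v - k \<in> {2*\<epsilon>..1-2*\<epsilon>} \<times> {2*\<epsilon>..1-2*\<epsilon>})}"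

definition cross :: "real \<Rightarrow> (real \<times> real) set" where
  "cross \<epsilon> = {v. (\<exists>m::int. \<bar>fst v - of_int m\<bar> \<le> \<epsilon>) \<or> (\<exists>m::int. \<bar>snd v - of_int m\<bar> \<le> \<epsilon>)}"

(* L_Y \<omega>0 = d(\<iota>_Y \<omega>0) = (\<partial>Y1/\<partial>x + \<partial>Y2/\<partial>y) dx\<and>dy *)
definition lie_omega0_zero :: "(real \<times> real \<Rightarrow> real \<times> real) \<Rightarrow> bool" where
  "lie_omega0_zero Y \<longleftrightarrow>
     (\<forall>v. fst (frechet_derivative Y (at v) (1,0)) + snd (frechet_derivative Y (at v) (0,1)) = 0)"

definition sympl_field :: "real \<Rightarrow> (real \<times> real \<Rightarrow> real \<times> real) \<Rightarrow> bool" where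
  "sympl_field \<epsilon> Y \<longleftrightarrow> smooth Y \<and> periodic2 Y \<and> lie_omega0_zero Y
      \<and> closure {v. Y v \<noteq> 0} \<subseteq> P_lift \<epsilon>"

definition is_flow :: "(real \<times> real \<Rightarrow> real \<times> real) \<Rightarrow> (real \<Rightarrow> real \<times> real \<Rightarrow> real \<times> real) \<Rightarrow> bool" where
  "is_flow X \<phi> \<longleftrightarrow> (\<forall>v. \<phi> 0 v = v \<and>
      (\<forall>t. ((\<lambda>s. \<phi> s v) has_vector_derivative X (\<phi> t v)) (at t)))"

(* Hamiltonian vector field: \<omega>0(X_H, -) = - dH, \<omega>0 = dx\<and>dy *)
definition ham_vf :: "(real \<times> real \<Rightarrow> real) \<Rightarrow> real \<times> real \<Rightarrow> real \<times> real" where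
  "ham_vf H v = (- frechet_derivative H (at v) (0,1), frechet_derivative H (at v) (1,0))"

definition Iqr :: "real \<Rightarrow> real \<Rightarrow> real set" where
  "Iqr q r = {(q - r)/2 <..< (q + r)/2}"

definition Jqr :: "real \<Rightarrow> real \<Rightarrow> real set" where
  "Jqr q r = {-(\<bar>q\<bar> - r)/2 .. (\<bar>q\<bar> - r)/2}"

(* \<rho>_{q,r}: smooth, values in [-1,1], support in (-(|q|+r)/2,(|q|+r)/2) (hence inside (-eps,eps);
   \<rho> is given as a real function, i.e. extended by 0 outside [-eps,eps]) *)
definition rho_ok :: "real \<Rightarrow> real \<Rightarrow> real \<Rightarrow> (real \<Rightarrow> real) \<Rightarrow> bool" where
  "rho_ok \<epsilon> q r \<rho> \<longleftrightarrow> smooth \<rho> \<and> (\<forall>x. \<bar>\<rho> x\<bar> \<le> 1)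
     \<and> closure {x. \<rho> x \<noteq> 0} \<subseteq> {-(\<bar>q\<bar> + r)/2 <..< (\<bar>q\<bar> + r)/2}
     \<and> (\<forall>x\<in>Iqr (-q) r. \<rho> x + \<rho> (x + q) = q / \<bar>q\<bar>)
     \<and> (\<forall>x\<in>Jqr q r. \<rho> x = q / \<bar>q\<bar>)"

(* H_{q,r} lifted to R^2 (x-version) and H'_{q,r} (y-version), representative in [-1/2,1/2] *)
definition Hx :: "real \<Rightarrow> (real \<Rightarrow> real) \<Rightarrow> real \<times> real \<Rightarrow> real" where
  "Hx \<epsilon> \<rho> v = (let x = fst v - of_int (round (fst v)) in if \<bar>x\<bar> \<le> \<epsilon> then - \<rho> x else 0)"

definition Hy :: "real \<Rightarrow> (real \<Rightarrow> real) \<Rightarrow> real \<times> real \<Rightarrow> real" where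
  "Hy \<epsilon> \<rho> v = (let y = snd v - of_int (round (snd v)) in if \<bar>y\<bar> \<le> \<epsilon> then - \<rho> y else 0)"

definition Delta :: "real \<Rightarrow> real \<Rightarrow> real" where
  "Delta c d = (if c \<noteq> 0 \<and> d \<noteq> 0 then min \<bar>c\<bar> \<bar>d\<bar> else max \<bar>c\<bar> \<bar>d\<bar>)"

definition qr :: "real \<Rightarrow> real \<Rightarrow> real \<Rightarrow> real \<times> real" where
  "qr \<epsilon> c d = (if c = 0 then (\<epsilon>, \<epsilon>) else (c, Delta c d))"

definition xstrip :: "real \<Rightarrow> real \<Rightarrow> (real \<times> real) set" where
  "xstrip q r = {v. \<exists>m::int. fst v - of_int m \<in> Iqr (-q) r}"

definition ystrip :: "real \<Rightarrow> real \<Rightarrow> (real \<times> real) set" where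
  "ystrip q r = {v. \<exists>m::int. snd v - of_int m \<in> Iqr (-q) r}"

(* \<sigma> = flow of X_H at time s on the strip, identity elsewhere *)
definition restr_map :: "(real \<times> real) set \<Rightarrow> (real \<times> real \<Rightarrow> real \<times> real) \<Rightarrow> real \<times> real \<Rightarrow> real \<times> real" where
  "restr_map S f v = (if v \<in> S then f v else v)"

end

theory Submission
  imports Defs
begin


lemma hvd_fst:
  fixes f :: "real \<Rightarrow> real \<times> real"
  assumes "(f has_vector_derivative D) (at t)"
  shows "((\<lambda>s. fst (f s)) has_real_derivative fst D) (at t)"
proof -
  have "((\<lambda>s. fst (f s)) has_derivative (\<lambda>x. fst (x *\<^sub>R D))) (at t)"
    using assms unfolding has_vector_derivative_def by (rule has_derivative_fst)
  then show ?thesis unfolding has_field_derivative_def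
    by (rule has_derivative_eq_rhs) (auto simp: fun_eq_iff)
qed

lemma hvd_snd:
  fixes f :: "real \<Rightarrow> real \<times> real"
  assumes "(f has_vector_derivative D) (at t)"
  shows "((\<lambda>s. snd (f s)) has_real_derivative snd D) (at t)"
proof -
  have "((\<lambda>s. snd (f s)) has_derivative (\<lambda>x. snd (x *\<^sub>R D))) (at t)"
    using assms unfolding has_vector_derivative_def by (rule has_derivative_snd)
  then show ?thesis unfolding has_field_derivative_def
    by (rule has_derivative_eq_rhs) (auto simp: fun_eq_iff)
qed

lemma const_deriv_01:
  fixes h :: "real \<Rightarrow> real"
  assumes d: "\<And>t. (h has_real_derivative h' t) (at t)"
    and z: "\<And>t. 0 < t \<Longrightarrow> t < 1 \<Longrightarrow> h' t = k"
  shows "h 1 = h 0 + k"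
proof -
  let ?g = "\<lambda>t. h t - k * t"
  have "?g 1 = ?g 0"
  proof (rule DERIV_isconst2[of 0 1 ?g 1])
    show "continuous_on {0..1} ?g"
      by (intro continuous_intros continuous_at_imp_continuous_on ballI DERIV_continuous[OF d])
    fix x :: real assume "0 < x" "x < 1"
    have "(?g has_real_derivative (h' x - k)) (at x)"
      by (auto intro!: derivative_eq_intros d)
    then show "DERIV ?g x :> 0" using z[OF \<open>0<x\<close> \<open>x<1\<close>] by simp
  qed auto
  then show ?thesis by simp
qed

lemma path_lemma:
  fixes h :: "real \<Rightarrow> real"
  assumes d: "\<And>t. (h has_real_derivative h' t) (at t)"
    and key: "\<And>t. 0 \<le> t \<Longrightarrow> t \<le> 1 \<Longrightarrow> \<bar>h t + p t\<bar> < e \<Longrightarrow> h' t = 0"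
    and cp: "continuous_on UNIV p"
    and inside: "\<And>t. 0 \<le> t \<Longrightarrow> t \<le> 1 \<Longrightarrow> \<bar>p t\<bar> < e"
    and h0: "h 0 = 0"
  shows "\<forall>t\<in>{0..1}. h t = 0"
proof (rule ccontr)
  assume "\<not> (\<forall>t\<in>{0..1}. h t = 0)"
  then obtain t1 where t1: "t1 \<in> {0..1}" "h t1 \<noteq> 0" by auto
  define A where "A = {t\<in>{0..1}. h t \<noteq> 0}"
  define u where "u = Inf A"
  have Ane: "A \<noteq> {}" using t1 A_def by auto
  have Abdd: "bdd_below A" unfolding A_def by (rule bdd_belowI[of _ 0]) auto
  have lowA: "\<And>a. a \<in> A \<Longrightarrow> u \<le> a" unfolding u_def using Abdd by (simp add: cInf_lower)
  have u0: "0 \<le> u" unfolding u_def using Ane by (intro cInf_greatest) (auto simp: A_def)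
  have u1: "u \<le> 1" using lowA[of t1] t1 A_def by auto
  have before: "h s = 0" if "0 \<le> s" "s < u" for s
  proof (rule ccontr)
    assume "h s \<noteq> 0"
    then have "s \<in> A" using that u1 by (auto simp: A_def)
    then show False using lowA that by force
  qed
  have contg: "\<And>x. isCont h x" using d by (rule DERIV_isCont)
  have hu: "h u = 0"
  proof (cases "u = 0")
    case True then show ?thesis using h0 by simp
  next
    case False
    then have "0 < u" using u0 by simp
    have "h u = h 0"
    proof (rule DERIV_isconst2[of 0 u h u])
      show "continuous_on {0..u} h"
        by (intro continuous_at_imp_continuous_on ballI contg)
      fix x assume x: "0 < x" "x < u"
      then have "h x = 0" by (intro before) auto
      then have "h' x = 0" using key[of x] x u1 inside[of x] by auto
      then show "DERIV h x :> 0" using d[of x] by simp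
    qed (use \<open>0<u\<close> in auto)
    then show ?thesis using h0 by simp
  qed
  have "isCont (\<lambda>s. h s + p s) u"
    using contg cp by (intro continuous_intros) (auto simp: continuous_on_eq_continuous_at)
  moreover have "\<bar>h u + p u\<bar> < e" using hu inside u0 u1 by auto
  ultimately obtain \<delta> where \<delta>: "\<delta> > 0" "\<And>s. \<bar>s - u\<bar> < \<delta> \<Longrightarrow> \<bar>h s + p s\<bar> < e"
  proof -
    assume r: "\<And>\<delta>. \<delta> > 0 \<Longrightarrow> (\<And>s. \<bar>s - u\<bar> < \<delta> \<Longrightarrow> \<bar>h s + p s\<bar> < e) \<Longrightarrow> thesis"
    have "open {y. \<bar>y\<bar> < e}" by (simp add: open_Collect_less continuous_intros)
    from \<open>isCont (\<lambda>s. h s + p s) u\<close> \<open>\<bar>h u + p u\<bar> < e\<close>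
    obtain d where "d > 0" "\<And>s. dist s u < d \<Longrightarrow> dist (h s + p s) (h u + p u) < e - \<bar>h u + p u\<bar>"
      unfolding continuous_at_eps_delta by (metis diff_gt_0_iff_gt)
    then show thesis
    proof (intro r[of d])
      fix s assume "d > 0" and hh: "\<And>s. dist s u < d \<Longrightarrow> dist (h s + p s) (h u + p u) < e - \<bar>h u + p u\<bar>"
        and "\<bar>s - u\<bar> < d"
      then have "\<bar>h s + p s - (h u + p u)\<bar> < e - \<bar>h u + p u\<bar>" using hh[of s] by (auto simp: dist_real_def)
      then show "\<bar>h s + p s\<bar> < e" by linarith
    qed
  qed
  have "\<exists>a\<in>A. a < u + \<delta>"
    using \<delta>(1) Ane Abdd unfolding u_def by (subst cInf_less_iff[symmetric]) auto
  then obtain a where a: "a \<in> A" "a < u + \<delta>" by auto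
  have ua: "u < a" using lowA[OF a(1)] hu a(1) A_def by (cases "u = a") auto
  have "h a = h u"
  proof (rule DERIV_isconst2[of u a h a])
    show "continuous_on {u..a} h"
      by (intro continuous_at_imp_continuous_on ballI contg)
    fix x assume x: "u < x" "x < a"
    then have "\<bar>h x + p x\<bar> < e" using \<delta> a by auto
    then have "h' x = 0" using key[of x] x u0 a(1) A_def by auto
    then show "DERIV h x :> 0" using d[of x] by simp
  qed (use ua in auto)
  then show False using hu a(1) A_def by auto
qed



lemma smooth_lipschitz:
  fixes Y :: "real \<times> real \<Rightarrow> real \<times> real"
  assumes sm: "smooth Y" and pe: "periodic2 Y"
  shows "\<exists>L. \<forall>x y. norm (Y x - Y y) \<le> L * norm (x - y)"
proof -
  have "Ck (Suc 0) Y" using sm smooth_def by blast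
  then obtain f' where D: "\<And>x. (Y has_derivative f' x) (at x)" and C0: "\<And>u. Ck 0 (\<lambda>x. f' x u)"
    by auto
  have C: "continuous_on UNIV (\<lambda>x. f' x u)" for u using C0[of u] by simp
  have per: "f' (x + k) = f' x" if k: "in_Z2 k" for x k
  proof -
    have e: "(\<lambda>z. Y (z + k)) = Y"
    proof (rule ext)
      fix z show "Y (z + k) = Y z" using pe k unfolding periodic2_def by blast
    qed
    have "((\<lambda>z. z + k) has_derivative (\<lambda>h. h)) (at x)" by (auto intro!: derivative_eq_intros)
    from has_derivative_compose[OF this D[of "x + k"]]
    have "((\<lambda>z. Y (z + k)) has_derivative f' (x + k)) (at x)" by simp
    then have "(Y has_derivative f' (x + k)) (at x)" using e by simp
    then show ?thesis using D[of x] by (rule has_derivative_unique)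
  qed
  define K where "K = ({0..1} \<times> {0..1} :: (real \<times> real) set)"
  have cK: "compact K" unfolding K_def by (intro compact_Times compact_Icc)
  have bnd: "\<exists>B. \<forall>x. norm (f' x u) \<le> B" for u
  proof -
    have "compact ((\<lambda>x. f' x u) ` K)"
      by (rule compact_continuous_image[OF continuous_on_subset[OF C] cK]) auto
    then have "bounded ((\<lambda>x. f' x u) ` K)" by (rule compact_imp_bounded)
    then obtain B where "\<forall>y\<in>(\<lambda>x. f' x u) ` K. norm y \<le> B" unfolding bounded_iff by blast
    then have B: "\<And>x. x \<in> K \<Longrightarrow> norm (f' x u) \<le> B" by blast
    have "norm (f' x u) \<le> B" for x
    proof -
      define k :: "real \<times> real" where "k = (of_int \<lfloor>fst x\<rfloor>, of_int \<lfloor>snd x\<rfloor>)"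
      have kz: "in_Z2 k" unfolding k_def in_Z2_def by auto
      have xk: "x - k \<in> K"
      proof -
        have fl: "0 \<le> a - of_int \<lfloor>a\<rfloor> \<and> a - of_int \<lfloor>a\<rfloor> \<le> 1" for a :: real
          using floor_correct[of a] unfolding of_int_add of_int_1 by linarith
        show ?thesis unfolding K_def k_def using fl[of "fst x"] fl[of "snd x"] by (simp add: mem_Times_iff)
      qed
      have "f' x = f' ((x - k) + k)" by simp
      also have "\<dots> = f' (x - k)" using per[OF kz] .
      finally show ?thesis using B[OF xk] by simp
    qed
    then show ?thesis by blast
  qed
  obtain B1 where B1: "\<And>x. norm (f' x (1,0)) \<le> B1" using bnd by blast
  obtain B2 where B2: "\<And>x. norm (f' x (0,1)) \<le> B2" using bnd by blast
  have on: "onorm (f' x) \<le> B1 + B2" for x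
  proof (rule onorm_le)
    fix h :: "real \<times> real"
    obtain h1 h2 where h: "h = (h1, h2)" by (cases h)
    have lin: "linear (f' x)" using D[of x] by (simp add: has_derivative_linear)
    have hdec: "h = h1 *\<^sub>R (1,0) + h2 *\<^sub>R (0,1)" using h by simp
    have eq: "f' x h = h1 *\<^sub>R f' x (1,0) + h2 *\<^sub>R f' x (0,1)"
      by (subst hdec) (simp only: linear_add[OF lin] linear_scale[OF lin])
    have "norm (f' x h) \<le> norm (h1 *\<^sub>R f' x (1,0)) + norm (h2 *\<^sub>R f' x (0,1))"
      unfolding eq by (rule norm_triangle_ineq)
    then have "norm (f' x h) \<le> \<bar>h1\<bar> * norm (f' x (1,0)) + \<bar>h2\<bar> * norm (f' x (0,1))"
      by simp
    also have "\<dots> \<le> \<bar>h1\<bar> * B1 + \<bar>h2\<bar> * B2"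
      by (intro add_mono mult_left_mono B1 B2) auto
    also have "\<dots> \<le> norm h * B1 + norm h * B2"
    proof -
      have a: "\<bar>h1\<bar> \<le> norm h" using h norm_fst_le[of h1 h2] by simp
      have b: "\<bar>h2\<bar> \<le> norm h" using h norm_snd_le[of h2 h1] by simp
      have "0 \<le> B1" using B1[of x] norm_ge_zero order_trans by blast
      moreover have "0 \<le> B2" using B2[of x] norm_ge_zero order_trans by blast
      ultimately show ?thesis using a b by (intro add_mono mult_right_mono) auto
    qed
    finally show "norm (f' x h) \<le> (B1 + B2) * norm h" by (simp add: algebra_simps)
  qed
  have "norm (Y x - Y y) \<le> (B1 + B2) * norm (x - y)" for x y
    by (rule differentiable_bound[of UNIV Y f']) (use D on in auto)
  then show ?thesis by blast
qed

lemma ode_unique: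
  fixes Y :: "'a::real_inner \<Rightarrow> 'a"
  assumes L: "\<forall>x y. norm (Y x - Y y) \<le> L * norm (x - y)"
    and g1: "\<forall>t. (\<gamma>a has_vector_derivative Y (\<gamma>a t)) (at t)"
    and g2: "\<forall>t. (\<gamma>b has_vector_derivative Y (\<gamma>b t)) (at t)"
    and e0: "\<gamma>a t0 = \<gamma>b t0"
  shows "\<gamma>a t = \<gamma>b t"
proof -
  define D where "D s = \<gamma>a s - \<gamma>b s" for s
  define V where "V s = Y (\<gamma>a s) - Y (\<gamma>b s)" for s
  define h where "h s = inner (D s) (D s)" for s
  define M where "M = 2 * \<bar>L\<bar>"
  have dD: "(D has_vector_derivative V s) (at s)" for s
    unfolding D_def V_def using g1 g2 by (auto intro!: has_vector_derivative_diff)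
  have dh: "(h has_real_derivative 2 * inner (D s) (V s)) (at s)" for s
  proof -
    have "(h has_derivative (\<lambda>x. inner (D s) (x *\<^sub>R V s) + inner (x *\<^sub>R V s) (D s))) (at s)"
      unfolding h_def using dD[of s] unfolding has_vector_derivative_def
      by (intro has_derivative_inner)
    then show ?thesis unfolding has_field_derivative_def
      by (rule has_derivative_eq_rhs) (auto simp: fun_eq_iff inner_commute algebra_simps)
  qed
  have hnn: "0 \<le> h s" for s unfolding h_def by simp
  have bound: "\<bar>2 * inner (D s) (V s)\<bar> \<le> M * h s" for s
  proof -
    have "\<bar>inner (D s) (V s)\<bar> \<le> norm (D s) * norm (V s)" by (rule Cauchy_Schwarz_ineq2)
    also have "\<dots> \<le> norm (D s) * (\<bar>L\<bar> * norm (D s))"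
    proof (intro mult_left_mono)
      have "norm (V s) \<le> L * norm (D s)" using L unfolding V_def D_def by blast
      also have "\<dots> \<le> \<bar>L\<bar> * norm (D s)" by (intro mult_right_mono) auto
      finally show "norm (V s) \<le> \<bar>L\<bar> * norm (D s)" .
    qed auto
    also have "\<dots> = \<bar>L\<bar> * h s" unfolding h_def by (simp add: power2_norm_eq_inner[symmetric] power2_eq_square)
    finally show ?thesis unfolding M_def by simp
  qed
  have h0: "h t0 = 0" unfolding h_def D_def using e0 by simp
  have "h t = 0"
  proof (cases "t0 \<le> t")
    case True
    define k where "k s = exp (- M * s) * h s" for s
    have "k t \<le> k t0"
    proof (rule DERIV_nonpos_imp_nonincreasing[OF True])
      fix x assume "t0 \<le> x" "x \<le> t"
      have "(k has_real_derivative exp (- M * x) * (- M) * h x + exp (- M * x) * (2 * inner (D x) (V x))) (at x)"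
        unfolding k_def by (auto intro!: derivative_eq_intros dh)
      moreover have "exp (- M * x) * (- M) * h x + exp (- M * x) * (2 * inner (D x) (V x)) \<le> 0"
      proof -
        have "2 * inner (D x) (V x) - M * h x \<le> 0" using bound[of x] by linarith
        then have "exp (- M * x) * (2 * inner (D x) (V x) - M * h x) \<le> 0"
          by (simp add: mult_nonneg_nonpos)
        then show ?thesis by (simp add: algebra_simps)
      qed
      ultimately show "\<exists>y. DERIV k x :> y \<and> y \<le> 0" by blast
    qed
    then have "k t \<le> 0" using h0 k_def by simp
    moreover have "0 \<le> k t" unfolding k_def using hnn by simp
    ultimately show ?thesis unfolding k_def by simp
  next
    case False
    then have le: "t \<le> t0" by simp
    define k where "k s = exp (M * s) * h s" for s
    have "k t \<le> k t0"
    proof (rule DERIV_nonneg_imp_nondecreasing[OF le])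
      fix x assume "t \<le> x" "x \<le> t0"
      have "(k has_real_derivative exp (M * x) * M * h x + exp (M * x) * (2 * inner (D x) (V x))) (at x)"
        unfolding k_def by (auto intro!: derivative_eq_intros dh)
      moreover have "exp (M * x) * M * h x + exp (M * x) * (2 * inner (D x) (V x)) \<ge> 0"
      proof -
        have "2 * inner (D x) (V x) + M * h x \<ge> 0" using bound[of x] by linarith
        then have "exp (M * x) * (2 * inner (D x) (V x) + M * h x) \<ge> 0"
          by simp
        then show ?thesis by (simp add: algebra_simps)
      qed
      ultimately show "\<exists>y. DERIV k x :> y \<and> y \<ge> 0" by blast
    qed
    then have "k t \<le> 0" using h0 k_def by simp
    moreover have "0 \<le> k t" unfolding k_def using hnn by simp
    ultimately show ?thesis unfolding k_def by simp
  qed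
  then show ?thesis unfolding h_def D_def by simp
qed

lemma flow0: "is_flow Y \<phi> \<Longrightarrow> \<phi> 0 w = w"
  unfolding is_flow_def by blast

lemma flow_group:
  fixes Y :: "real \<times> real \<Rightarrow> real \<times> real"
  assumes L: "\<forall>x y. norm (Y x - Y y) \<le> L * norm (x - y)"
    and fl: "is_flow Y \<phi>"
  shows "\<phi> (s + t) v = \<phi> s (\<phi> t v)"
proof -
  have d1: "\<forall>s. ((\<lambda>s. \<phi> (s + t) v) has_vector_derivative Y (\<phi> (s + t) v)) (at s)"
  proof
    fix s
    have a: "((\<lambda>s. s + t) has_vector_derivative 1) (at s)"
      by (auto intro!: derivative_eq_intros simp: has_real_derivative_iff_has_vector_derivative[symmetric])
    have b: "((\<lambda>s. \<phi> s v) has_vector_derivative Y (\<phi> (s + t) v)) (at (s + t))"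
      using fl unfolding is_flow_def by blast
    from vector_diff_chain_at[OF a b] show "((\<lambda>s. \<phi> (s + t) v) has_vector_derivative Y (\<phi> (s + t) v)) (at s)"
      by (simp add: o_def)
  qed
  have d2: "\<forall>s. ((\<lambda>s. \<phi> s (\<phi> t v)) has_vector_derivative Y (\<phi> s (\<phi> t v))) (at s)"
    using fl unfolding is_flow_def by blast
  have e: "\<phi> (0 + t) v = \<phi> 0 (\<phi> t v)" using flow0[OF fl] by simp
  show ?thesis using ode_unique[OF L d1 d2 e] by simp
qed

lemma flow_bij:
  fixes Y :: "real \<times> real \<Rightarrow> real \<times> real"
  assumes L: "\<exists>L. \<forall>x y. norm (Y x - Y y) \<le> L * norm (x - y)"
    and fl: "is_flow Y \<phi>"
  shows "bij (\<phi> 1)"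
proof -
  obtain L where L: "\<forall>x y. norm (Y x - Y y) \<le> L * norm (x - y)" using L by blast
  have 1: "\<phi> 1 (\<phi> (-1) v) = v" for v
    using flow_group[OF L fl, of 1 "-1" v] flow0[OF fl] by simp
  have 2: "\<phi> (-1) (\<phi> 1 v) = v" for v
    using flow_group[OF L fl, of "-1" 1 v] flow0[OF fl] by simp
  show ?thesis by (rule bij_betw_byWitness[of UNIV "\<phi> (-1)"]) (use 1 2 in auto)
qed



lemma rho_supp:
  assumes "rho_ok \<epsilon> q r \<rho>" "(\<bar>q\<bar> + r)/2 \<le> \<epsilon>" "\<rho> z \<noteq> 0"
  shows "\<bar>z\<bar> < \<epsilon>"
proof -
  have "z \<in> {x. \<rho> x \<noteq> 0}" using assms(3) by simp
  then have "z \<in> closure {x. \<rho> x \<noteq> 0}" by (rule subsetD[OF closure_subset])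
  moreover have "closure {x. \<rho> x \<noteq> 0} \<subseteq> {-(\<bar>q\<bar> + r)/2 <..< (\<bar>q\<bar> + r)/2}"
    using assms(1) unfolding rho_ok_def by (elim conjE)
  ultimately have "z \<in> {-(\<bar>q\<bar> + r)/2 <..< (\<bar>q\<bar> + r)/2}" by (rule subsetD[rotated])
  then have "\<bar>z\<bar> < (\<bar>q\<bar> + r)/2" by (simp; linarith)
  then show ?thesis using assms(2) by linarith
qed

lemma rho_diff:
  assumes "rho_ok \<epsilon> q r \<rho>"
  shows "(\<rho> has_real_derivative deriv \<rho> x) (at x)"
proof -
  have "smooth \<rho>" using assms unfolding rho_ok_def by (elim conjE)
  then have "Ck (Suc 0) \<rho>" unfolding smooth_def by (rule spec)
  then obtain f' where "\<forall>x. (\<rho> has_derivative f' x) (at x)" by auto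
  then have "\<rho> differentiable at x" unfolding differentiable_def by blast
  then show ?thesis by (simp add: DERIV_deriv_iff_real_differentiable)
qed

lemma rho_round_local:
  assumes ok: "rho_ok \<epsilon> q r \<rho>" and qe: "(\<bar>q\<bar> + r)/2 \<le> \<epsilon>" and e: "\<epsilon> < 1/4"
    and y: "\<bar>y - x\<bar> < 1/4"
  shows "\<rho> (y - of_int (round y)) = \<rho> (y - of_int (round x))"
proof (cases "round y = round x")
  case True then show ?thesis by simp
next
  case False
  define M where "M = (of_int (round x) :: real)"
  define N where "N = (of_int (round y) :: real)"
  have ax: "\<bar>M - x\<bar> \<le> 1/2" unfolding M_def by (rule of_int_round_abs_le)
  have ay: "\<bar>N - y\<bar> \<le> 1/2" unfolding N_def by (rule of_int_round_abs_le)
  have "round y \<ge> round x + 1 \<or> round x \<ge> round y + 1" using False by linarith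
  then have d: "N \<ge> M + 1 \<or> M \<ge> N + 1" unfolding M_def N_def
    by (metis of_int_1 of_int_add of_int_le_iff)
  have c1: "\<not> \<bar>y - M\<bar> < \<epsilon>" using d ay e by (auto simp: abs_if split: if_splits)
  have c2: "\<not> \<bar>y - N\<bar> < \<epsilon>" using d ax y e by (auto simp: abs_if split: if_splits)
  have 1: "\<rho> (y - M) = 0" using rho_supp[OF ok qe, of "y - M"] c1 by blast
  have 2: "\<rho> (y - N) = 0" using rho_supp[OF ok qe, of "y - N"] c2 by blast
  show ?thesis using 1 2 unfolding M_def N_def by simp
qed

lemma Pf_deriv:
  assumes ok: "rho_ok \<epsilon> q r \<rho>" and qe: "(\<bar>q\<bar> + r)/2 \<le> \<epsilon>" and e: "\<epsilon> < 1/4"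
  shows "((\<lambda>y. - \<rho> (y - of_int (round y))) has_real_derivative - deriv \<rho> (x - of_int (round x))) (at x)"
proof -
  let ?m = "of_int (round x) :: real"
  have "((\<lambda>y. - \<rho> (y - ?m)) has_real_derivative - (deriv \<rho> (x - ?m) * 1)) (at x)"
    by (auto intro!: derivative_eq_intros DERIV_chain2[OF rho_diff[OF ok]])
  then have "((\<lambda>y. - \<rho> (y - ?m)) has_real_derivative - deriv \<rho> (x - ?m)) (at x)" by simp
  then show ?thesis
  proof (rule has_field_derivative_transform_within_open[of _ _ _ "ball x (1/4)"])
    fix y assume "y \<in> ball x (1/4)"
    then have "\<bar>y - x\<bar> < 1/4" by (simp add: dist_real_def abs_minus_commute)
    then show "- \<rho> (y - ?m) = - \<rho> (y - of_int (round y))"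
      using rho_round_local[OF ok qe e] by simp
  qed auto
qed

lemma Hx_eq:
  assumes ok: "rho_ok \<epsilon> q r \<rho>" and qe: "(\<bar>q\<bar> + r)/2 \<le> \<epsilon>"
  shows "Hx \<epsilon> \<rho> = (\<lambda>v. - \<rho> (fst v - of_int (round (fst v))))"
proof
  fix v
  show "Hx \<epsilon> \<rho> v = - \<rho> (fst v - of_int (round (fst v)))"
    unfolding Hx_def Let_def using rho_supp[OF ok qe, of "fst v - of_int (round (fst v))"]
    by (cases "\<rho> (fst v - of_int (round (fst v))) = 0") auto
qed

lemma Hy_eq:
  assumes ok: "rho_ok \<epsilon> q r \<rho>" and qe: "(\<bar>q\<bar> + r)/2 \<le> \<epsilon>"
  shows "Hy \<epsilon> \<rho> = (\<lambda>v. - \<rho> (snd v - of_int (round (snd v))))"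
proof
  fix v
  show "Hy \<epsilon> \<rho> v = - \<rho> (snd v - of_int (round (snd v)))"
    unfolding Hy_def Let_def using rho_supp[OF ok qe, of "snd v - of_int (round (snd v))"]
    by (cases "\<rho> (snd v - of_int (round (snd v))) = 0") auto
qed

lemma ham_vf_Hx:
  assumes ok: "rho_ok \<epsilon> q r \<rho>" and qe: "(\<bar>q\<bar> + r)/2 \<le> \<epsilon>" and e: "\<epsilon> < 1/4"
  shows "ham_vf (Hx \<epsilon> \<rho>) w = (0, - deriv \<rho> (fst w - of_int (round (fst w))))"
proof -
  let ?P = "\<lambda>y. - \<rho> (y - of_int (round y))"
  let ?d = "- deriv \<rho> (fst w - of_int (round (fst w)))"
  have "((\<lambda>v. ?P (fst v)) has_derivative (\<lambda>h. fst h * ?d)) (at w)"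
    by (rule DERIV_compose_FDERIV[OF Pf_deriv[OF ok qe e]]) (rule has_derivative_fst[OF has_derivative_ident])
  then have "(Hx \<epsilon> \<rho> has_derivative (\<lambda>h. fst h * ?d)) (at w)" using Hx_eq[OF ok qe] by simp
  then have "frechet_derivative (Hx \<epsilon> \<rho>) (at w) = (\<lambda>h. fst h * ?d)" by (rule frechet_derivative_at[symmetric])
  then show ?thesis unfolding ham_vf_def by simp
qed

lemma ham_vf_Hy:
  assumes ok: "rho_ok \<epsilon> q r \<rho>" and qe: "(\<bar>q\<bar> + r)/2 \<le> \<epsilon>" and e: "\<epsilon> < 1/4"
  shows "ham_vf (Hy \<epsilon> \<rho>) w = (deriv \<rho> (snd w - of_int (round (snd w))), 0)"
proof -
  let ?P = "\<lambda>y. - \<rho> (y - of_int (round y))"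
  let ?d = "- deriv \<rho> (snd w - of_int (round (snd w)))"
  have "((\<lambda>v. ?P (snd v)) has_derivative (\<lambda>h. snd h * ?d)) (at w)"
    by (rule DERIV_compose_FDERIV[OF Pf_deriv[OF ok qe e]]) (rule has_derivative_snd[OF has_derivative_ident])
  then have "(Hy \<epsilon> \<rho> has_derivative (\<lambda>h. snd h * ?d)) (at w)" using Hy_eq[OF ok qe] by simp
  then have "frechet_derivative (Hy \<epsilon> \<rho>) (at w) = (\<lambda>h. snd h * ?d)" by (rule frechet_derivative_at[symmetric])
  then show ?thesis unfolding ham_vf_def by simp
qed

lemma flow_vert:
  assumes fl: "is_flow X \<psi>" and X: "\<And>w. X w = (0, g (fst w))"
  shows "\<psi> t v = (fst v, snd v + t * g (fst v))"
proof -
  have dv: "((\<lambda>s. \<psi> s v) has_vector_derivative X (\<psi> s v)) (at s)" for s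
    using fl unfolding is_flow_def by blast
  have f1: "((\<lambda>s. fst (\<psi> s v)) has_real_derivative 0) (at s)" for s
    using hvd_fst[OF dv[of s]] X by simp
  have fst_c: "fst (\<psi> s v) = fst v" for s
    using DERIV_isconst_all[of "\<lambda>s. fst (\<psi> s v)" s 0] f1 flow0[OF fl] by simp
  have "((\<lambda>s. snd (\<psi> s v) - s * g (fst v)) has_real_derivative (g (fst v) - 1 * g (fst v))) (at s)" for s
    using hvd_snd[OF dv[of s]] X[of "\<psi> s v"] fst_c[of s]
    by (auto intro!: derivative_eq_intros)
  then have "snd (\<psi> t v) - t * g (fst v) = snd (\<psi> 0 v) - 0 * g (fst v)"
    by (intro DERIV_isconst_all) simp
  then have "snd (\<psi> t v) = snd v + t * g (fst v)" using flow0[OF fl] by simp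
  then show ?thesis using fst_c[of t] by (simp add: prod_eq_iff)
qed

lemma flow_horiz:
  assumes fl: "is_flow X \<psi>" and X: "\<And>w. X w = (g (snd w), 0)"
  shows "\<psi> t v = (fst v + t * g (snd v), snd v)"
proof -
  have dv: "((\<lambda>s. \<psi> s v) has_vector_derivative X (\<psi> s v)) (at s)" for s
    using fl unfolding is_flow_def by blast
  have f1: "((\<lambda>s. snd (\<psi> s v)) has_real_derivative 0) (at s)" for s
    using hvd_snd[OF dv[of s]] X by simp
  have snd_c: "snd (\<psi> s v) = snd v" for s
    using DERIV_isconst_all[of "\<lambda>s. snd (\<psi> s v)" s 0] f1 flow0[OF fl] by simp
  have "((\<lambda>s. fst (\<psi> s v) - s * g (snd v)) has_real_derivative (g (snd v) - 1 * g (snd v))) (at s)" for s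
    using hvd_fst[OF dv[of s]] X[of "\<psi> s v"] snd_c[of s]
    by (auto intro!: derivative_eq_intros)
  then have "fst (\<psi> t v) - t * g (snd v) = fst (\<psi> 0 v) - 0 * g (snd v)"
    by (intro DERIV_isconst_all) simp
  then have "fst (\<psi> t v) = fst v + t * g (snd v)" using flow0[OF fl] by simp
  then show ?thesis using snd_c[of t] by (simp add: prod_eq_iff)
qed



lemma in_cross_x: "\<bar>fst w - of_int m\<bar> \<le> \<epsilon> \<Longrightarrow> w \<in> cross \<epsilon>"
  unfolding cross_def by blast

lemma in_cross_y: "\<bar>snd w - of_int m\<bar> \<le> \<epsilon> \<Longrightarrow> w \<in> cross \<epsilon>"
  unfolding cross_def by blast

lemma tau_x:
  assumes fl: "is_flow Y \<phi>" and cr: "\<forall>w\<in>cross \<epsilon>. Y w = (c1, c2)"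
    and inside: "\<And>t. 0 \<le> t \<Longrightarrow> t \<le> 1 \<Longrightarrow> \<bar>fst v + c1 * t - of_int m\<bar> < \<epsilon>"
  shows "\<phi> 1 v = (fst v + c1, snd v + c2)"
proof -
  have dv: "((\<lambda>s. \<phi> s v) has_vector_derivative Y (\<phi> s v)) (at s)" for s
    using fl unfolding is_flow_def by blast
  let ?h = "\<lambda>t. fst (\<phi> t v) - fst v - c1 * t"
  let ?p = "\<lambda>t. fst v + c1 * t - of_int m"
  have dh: "(?h has_real_derivative (fst (Y (\<phi> t v)) - c1)) (at t)" for t
    using hvd_fst[OF dv[of t]] by (auto intro!: derivative_eq_intros)
  have H: "\<forall>t\<in>{0..1}. ?h t = 0"
  proof (rule path_lemma[OF dh _ _ inside])
    fix t :: real assume "0 \<le> t" "t \<le> 1" "\<bar>?h t + ?p t\<bar> < \<epsilon>"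
    then have "\<bar>fst (\<phi> t v) - of_int m\<bar> \<le> \<epsilon>" by simp
    then have "\<phi> t v \<in> cross \<epsilon>" by (rule in_cross_x)
    then show "fst (Y (\<phi> t v)) - c1 = 0" using cr by simp
  next
    show "continuous_on UNIV ?p" by (intro continuous_intros)
  next
    show "?h 0 = 0" using flow0[OF fl] by simp
  qed
  have fx: "fst (\<phi> t v) = fst v + c1 * t" if "0 \<le> t" "t \<le> 1" for t
  proof -
    have "?h t = 0" using H that by simp
    then show ?thesis by linarith
  qed
  have incr: "\<phi> t v \<in> cross \<epsilon>" if "0 \<le> t" "t \<le> 1" for t
    using inside[OF that] fx[OF that] by (intro in_cross_x[of _ m]) simp
  have "snd (\<phi> 1 v) = snd (\<phi> 0 v) + c2"
  proof (rule const_deriv_01[of "\<lambda>s. snd (\<phi> s v)" "\<lambda>s. snd (Y (\<phi> s v))"])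
    show "((\<lambda>s. snd (\<phi> s v)) has_real_derivative snd (Y (\<phi> t v))) (at t)" for t
      by (rule hvd_snd[OF dv])
    fix t :: real assume "0 < t" "t < 1"
    then show "snd (Y (\<phi> t v)) = c2" using incr[of t] cr by simp
  qed
  then show ?thesis using fx[of 1] flow0[OF fl] by (simp add: prod_eq_iff)
qed

lemma tau_y:
  assumes fl: "is_flow Y \<phi>" and cr: "\<forall>w\<in>cross \<epsilon>. Y w = (c1, c2)"
    and inside: "\<And>t. 0 \<le> t \<Longrightarrow> t \<le> 1 \<Longrightarrow> \<bar>snd v + c2 * t - of_int m\<bar> < \<epsilon>"
  shows "\<phi> 1 v = (fst v + c1, snd v + c2)"
proof -
  have dv: "((\<lambda>s. \<phi> s v) has_vector_derivative Y (\<phi> s v)) (at s)" for s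
    using fl unfolding is_flow_def by blast
  let ?h = "\<lambda>t. snd (\<phi> t v) - snd v - c2 * t"
  let ?p = "\<lambda>t. snd v + c2 * t - of_int m"
  have dh: "(?h has_real_derivative (snd (Y (\<phi> t v)) - c2)) (at t)" for t
    using hvd_snd[OF dv[of t]] by (auto intro!: derivative_eq_intros)
  have H: "\<forall>t\<in>{0..1}. ?h t = 0"
  proof (rule path_lemma[OF dh _ _ inside])
    fix t :: real assume "0 \<le> t" "t \<le> 1" "\<bar>?h t + ?p t\<bar> < \<epsilon>"
    then have "\<bar>snd (\<phi> t v) - of_int m\<bar> \<le> \<epsilon>" by simp
    then have "\<phi> t v \<in> cross \<epsilon>" by (rule in_cross_y)
    then show "snd (Y (\<phi> t v)) - c2 = 0" using cr by simp
  next
    show "continuous_on UNIV ?p" by (intro continuous_intros)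
  next
    show "?h 0 = 0" using flow0[OF fl] by simp
  qed
  have fx: "snd (\<phi> t v) = snd v + c2 * t" if "0 \<le> t" "t \<le> 1" for t
  proof -
    have "?h t = 0" using H that by simp
    then show ?thesis by linarith
  qed
  have incr: "\<phi> t v \<in> cross \<epsilon>" if "0 \<le> t" "t \<le> 1" for t
    using inside[OF that] fx[OF that] by (intro in_cross_y[of _ m]) simp
  have "fst (\<phi> 1 v) = fst (\<phi> 0 v) + c1"
  proof (rule const_deriv_01[of "\<lambda>s. fst (\<phi> s v)" "\<lambda>s. fst (Y (\<phi> s v))"])
    show "((\<lambda>s. fst (\<phi> s v)) has_real_derivative fst (Y (\<phi> t v))) (at t)" for t
      by (rule hvd_fst[OF dv])
    fix t :: real assume "0 < t" "t < 1"
    then show "fst (Y (\<phi> t v)) = c1" using incr[of t] cr by simp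
  qed
  then show ?thesis using fx[of 1] flow0[OF fl] by (simp add: prod_eq_iff)
qed

lemma strip_abs:
  assumes "x \<in> Iqr (-q) r" "(\<bar>q\<bar> + r)/2 \<le> \<epsilon>"
  shows "\<bar>x\<bar> < \<epsilon>"
  using assms unfolding Iqr_def by (auto simp: abs_if split: if_splits)

lemma strip_path:
  assumes "x \<in> Iqr (-c) r" "(\<bar>c\<bar> + r)/2 \<le> \<epsilon>" "0 \<le> t" "t \<le> 1"
  shows "\<bar>x + c * t\<bar> < \<epsilon>"
proof -
  have "\<bar>t - 1/2\<bar> \<le> 1/2" using assms(3,4) unfolding abs_le_iff by linarith
  then have "\<bar>c\<bar> * \<bar>t - 1/2\<bar> \<le> \<bar>c\<bar> * (1/2)" by (intro mult_left_mono) auto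
  then have u: "\<bar>c * (t - 1/2)\<bar> \<le> \<bar>c\<bar> / 2" by (simp add: abs_mult)
  have "(-c - r)/2 < x \<and> x < (-c + r)/2" using assms(1) unfolding Iqr_def by simp
  then have "\<bar>x + c/2\<bar> < r/2" unfolding abs_less_iff by (simp add: field_simps)
  moreover have "x + c * t = (x + c/2) + c * (t - 1/2)" by (simp add: algebra_simps)
  ultimately have "\<bar>x + c * t\<bar> < r/2 + \<bar>c\<bar>/2" using u by (metis abs_triangle_ineq add_less_le_mono order_le_less_trans)
  moreover have "r/2 + \<bar>c\<bar>/2 \<le> \<epsilon>" using assms(2) by (simp add: field_simps)
  ultimately show ?thesis by linarith
qed

lemma strip_disj:
  assumes "x + c - of_int m1 \<in> Iqr (-c) r" "x - of_int m2 \<in> Iqr (-c) r"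
    and "r \<le> \<bar>c\<bar>" "\<bar>c\<bar> < 1/4" "r < 1/4"
  shows False
proof -
  have a: "\<bar>c + of_int m2 - of_int m1\<bar> < r" using assms(1,2) unfolding Iqr_def by (auto simp: abs_less_iff)
  then have "of_int (m2 - m1) < (1::real)" "of_int (m2 - m1) > (-1::real)" using assms(4,5) by (auto simp: abs_less_iff)
  then have "m2 - m1 < 1" "m2 - m1 > -1" by linarith+
  then have "m1 = m2" by linarith
  then show False using a assms(3) by simp
qed

lemma commute_abstract:
  assumes bT: "bij T" and bs: "bij s" and out: "\<And>v. v \<notin> S \<Longrightarrow> s v = v"
    and inS: "\<And>v. v \<in> S \<Longrightarrow> s v \<in> S"
    and alt: "(\<forall>v\<in>S. T v = v) \<or> (\<forall>v\<in>S. T v \<notin> S)"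
  shows "s ((T \<circ> inv s \<circ> inv T) w) = (T \<circ> inv s \<circ> inv T) (s w)"
proof -
  have is1: "s (inv s v) = v" for v using bs by (simp add: bij_is_surj surj_f_inv_f)
  have is2: "inv s (s v) = v" for v using bs by (simp add: bij_is_inj)
  have iT1: "T (inv T v) = v" for v using bT by (simp add: bij_is_surj surj_f_inv_f)
  have iT2: "inv T (T v) = v" for v using bT by (simp add: bij_is_inj)
  have invout: "inv s v = v" if "v \<notin> S" for v using is2[of v] out[OF that] by simp
  have invin: "inv s v \<in> S" if "v \<in> S" for v
  proof (rule ccontr)
    assume "inv s v \<notin> S"
    then have "s (inv s v) = inv s v" by (rule out)
    then show False using is1[of v] that \<open>inv s v \<notin> S\<close> by simp
  qed
  let ?G = "T \<circ> inv s \<circ> inv T"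
  from alt show ?thesis
  proof
    assume A: "\<forall>v\<in>S. T v = v"
    have iTS: "inv T v = v" if "v \<in> S" for v using iT2[of v] A that by simp
    have iTo: "inv T v \<notin> S" if "v \<notin> S" for v
      using iT1[of v] A that by (metis)
    have G1: "?G v = inv s v" if "v \<in> S" for v using iTS[OF that] A invin[OF that] by simp
    have G2: "?G v = v" if "v \<notin> S" for v using iTo[OF that] invout iT1 by simp
    show ?thesis
    proof (cases "w \<in> S")
      case True
      then show ?thesis using G1[OF True] G1[OF inS[OF True]] is1 is2 by simp
    next
      case False
      then show ?thesis using G2[OF False] out[OF False] by simp
    qed
  next
    assume B: "\<forall>v\<in>S. T v \<notin> S"
    have G1: "?G v \<in> T ` S" if vT: "v \<in> T ` S" for v
    proof -
      obtain u where u: "u \<in> S" "v = T u" using vT by blast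
      then show ?thesis using iT2[of u] invin[OF u(1)] by simp
    qed
    have TS: "v \<notin> S" if "v \<in> T ` S" for v using that B by blast
    have G2: "?G v = v" if "v \<notin> T ` S" for v
    proof -
      have "inv T v \<notin> S" using that iT1[of v] by (metis image_eqI)
      then show ?thesis using invout iT1 by simp
    qed
    show ?thesis
    proof (cases "w \<in> S")
      case True
      then have "w \<notin> T ` S" using TS by blast
      moreover have "s w \<notin> T ` S" using TS inS[OF True] by blast
      ultimately show ?thesis using G2 by simp
    next
      case False
      then have sw: "s w = w" by (rule out)
      show ?thesis
      proof (cases "w \<in> T ` S")
        case True
        then have "?G w \<notin> S" using G1 TS by blast
        then show ?thesis using out sw by simp
      next
        case False
        then show ?thesis using G2 sw by simp
      qed
    qed
  qed
qed



lemma restr_bij_vert: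
  fixes \<sigma> :: "real \<times> real \<Rightarrow> real \<times> real"
  assumes sig: "\<And>v. \<sigma> v = (if v \<in> S then (fst v, snd v + h (fst v)) else v)"
    and dep: "\<And>v w. fst v = fst w \<Longrightarrow> v \<in> S \<longleftrightarrow> w \<in> S"
  shows "bij \<sigma>"
proof -
  define f' where "f' v = (if v \<in> S then (fst v, snd v - h (fst v)) else v)" for v
  have 1: "f' (\<sigma> a) = a" for a
  proof (cases "a \<in> S")
    case True
    then have "(fst a, snd a + h (fst a)) \<in> S" using dep[of "(fst a, snd a + h (fst a))" a] by simp
    then show ?thesis using True unfolding f'_def sig by simp
  qed (simp add: f'_def sig)
  have 2: "\<sigma> (f' a) = a" for a
  proof (cases "a \<in> S")
    case True
    then have "(fst a, snd a - h (fst a)) \<in> S" using dep[of "(fst a, snd a - h (fst a))" a] by simp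
    then show ?thesis using True unfolding f'_def sig by simp
  qed (simp add: f'_def sig)
  show ?thesis by (rule bij_betw_byWitness[of UNIV f']) (use 1 2 in auto)
qed

lemma restr_bij_horiz:
  fixes \<sigma> :: "real \<times> real \<Rightarrow> real \<times> real"
  assumes sig: "\<And>v. \<sigma> v = (if v \<in> S then (fst v + h (snd v), snd v) else v)"
    and dep: "\<And>v w. snd v = snd w \<Longrightarrow> v \<in> S \<longleftrightarrow> w \<in> S"
  shows "bij \<sigma>"
proof -
  define f' where "f' v = (if v \<in> S then (fst v - h (snd v), snd v) else v)" for v
  have 1: "f' (\<sigma> a) = a" for a
  proof (cases "a \<in> S")
    case True
    then have "(fst a + h (snd a), snd a) \<in> S" using dep[of "(fst a + h (snd a), snd a)" a] by simp
    then show ?thesis using True unfolding f'_def sig by simp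
  qed (simp add: f'_def sig)
  have 2: "\<sigma> (f' a) = a" for a
  proof (cases "a \<in> S")
    case True
    then have "(fst a - h (snd a), snd a) \<in> S" using dep[of "(fst a - h (snd a), snd a)" a] by simp
    then show ?thesis using True unfolding f'_def sig by simp
  qed (simp add: f'_def sig)
  show ?thesis by (rule bij_betw_byWitness[of UNIV f']) (use 1 2 in auto)
qed

lemma xstrip_dep: "fst v = fst w \<Longrightarrow> v \<in> xstrip q r \<longleftrightarrow> w \<in> xstrip q r"
  unfolding xstrip_def by simp

lemma ystrip_dep: "snd v = snd w \<Longrightarrow> v \<in> ystrip q r \<longleftrightarrow> w \<in> ystrip q r"
  unfolding ystrip_def by simp

lemma Delta_sym: "Delta d c = Delta c d"
  unfolding Delta_def by (auto simp: min.commute max.commute)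

lemma Delta_le: "\<bar>c\<bar> \<le> \<epsilon> \<Longrightarrow> \<bar>d\<bar> \<le> \<epsilon> \<Longrightarrow> Delta c d \<le> \<epsilon>"
  unfolding Delta_def by auto

lemma Delta_le_c: "c \<noteq> 0 \<Longrightarrow> Delta c d \<le> \<bar>c\<bar>"
  unfolding Delta_def by auto

lemma qr_bound:
  assumes "0 < \<epsilon>" "\<bar>c\<bar> \<le> \<epsilon>" "\<bar>d\<bar> \<le> \<epsilon>"
  shows "(\<bar>fst (qr \<epsilon> c d)\<bar> + snd (qr \<epsilon> c d))/2 \<le> \<epsilon>"
proof (cases "c = 0")
  case True then show ?thesis using assms unfolding qr_def by simp
next
  case False
  have "Delta c d \<le> \<epsilon>" using Delta_le assms by blast
  then show ?thesis using False assms unfolding qr_def by (simp add: field_simps)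
qed



theorem lemma3p2:
  fixes \<epsilon> a b c d :: real
    and Y Y' :: "real \<times> real \<Rightarrow> real \<times> real"
    and \<phi> \<phi>' \<psi> \<psi>' :: "real \<Rightarrow> real \<times> real \<Rightarrow> real \<times> real"
    and \<rho> \<rho>' :: "real \<Rightarrow> real"
  assumes "0 < \<epsilon>" and "\<epsilon> < 1/4" and "\<bar>c\<bar> \<le> \<epsilon>" and "\<bar>d\<bar> \<le> \<epsilon>"
    and "sympl_field \<epsilon> Y" and "\<forall>v\<in>cross \<epsilon>. Y v = (c, 0)"
    and "sympl_field \<epsilon> Y'" and "\<forall>v\<in>cross \<epsilon>. Y' v = (0, - d)"
    and "is_flow Y \<phi>" and "is_flow Y' \<phi>'"
    and "rho_ok \<epsilon> (fst (qr \<epsilon> c d)) (snd (qr \<epsilon> c d)) \<rho>"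
    and "rho_ok \<epsilon> (fst (qr \<epsilon> d c)) (snd (qr \<epsilon> d c)) \<rho>'"
    and "is_flow (ham_vf (Hx \<epsilon> \<rho>)) \<psi>"
    and "is_flow (ham_vf (Hy \<epsilon> \<rho>')) \<psi>'"
  shows "let \<tau> = \<phi> 1; \<tau>' = \<phi>' 1;
             \<sigma> = restr_map (xstrip (fst (qr \<epsilon> c d)) (snd (qr \<epsilon> c d))) (\<psi> b);
             \<sigma>' = restr_map (ystrip (fst (qr \<epsilon> d c)) (snd (qr \<epsilon> d c))) (\<psi>' a)
         in commutes_T \<sigma> (\<tau> \<circ> inv \<sigma> \<circ> inv \<tau>)
          \<and> commutes_T \<sigma>' (inv \<tau>' \<circ> inv \<sigma>' \<circ> \<tau>')
          \<and> commutes_T \<sigma> \<tau>' \<and> commutes_T \<sigma>' \<tau>"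
proof -
  note e0 = assms(1) and e1 = assms(2) and ce = assms(3) and de = assms(4)
    and sY = assms(5) and Yc = assms(6) and sY' = assms(7) and Yd = assms(8)
    and flY = assms(9) and flY' = assms(10) and rok = assms(11) and rok' = assms(12)
    and flp = assms(13) and flp' = assms(14)
  define q1 where "q1 = fst (qr \<epsilon> c d)"
  define r1 where "r1 = snd (qr \<epsilon> c d)"
  define q2 where "q2 = fst (qr \<epsilon> d c)"
  define r2 where "r2 = snd (qr \<epsilon> d c)"
  define S1 where "S1 = xstrip q1 r1"
  define S2 where "S2 = ystrip q2 r2"
  define \<tau> where "\<tau> = \<phi> 1"
  define \<tau>' where "\<tau>' = \<phi>' 1"
  define \<sigma> where "\<sigma> = restr_map S1 (\<psi> b)"
  define \<sigma>' where "\<sigma>' = restr_map S2 (\<psi>' a)"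
  have qe1: "(\<bar>q1\<bar> + r1)/2 \<le> \<epsilon>" unfolding q1_def r1_def by (rule qr_bound[OF e0 ce de])
  have qe2: "(\<bar>q2\<bar> + r2)/2 \<le> \<epsilon>" unfolding q2_def r2_def by (rule qr_bound[OF e0 de ce])
  have rok1: "rho_ok \<epsilon> q1 r1 \<rho>" using rok unfolding q1_def r1_def .
  have rok2: "rho_ok \<epsilon> q2 r2 \<rho>'" using rok' unfolding q2_def r2_def .
  define g1 where "g1 x = - deriv \<rho> (x - of_int (round x))" for x
  define g2 where "g2 y = deriv \<rho>' (y - of_int (round y))" for y
  have psi: "\<psi> t v = (fst v, snd v + t * g1 (fst v))" for t v
    by (rule flow_vert[OF flp]) (simp add: ham_vf_Hx[OF rok1 qe1 e1] g1_def)
  have psi': "\<psi>' t v = (fst v + t * g2 (snd v), snd v)" for t v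
    by (rule flow_horiz[OF flp']) (simp add: ham_vf_Hy[OF rok2 qe2 e1] g2_def)
  have sig: "\<sigma> v = (if v \<in> S1 then (fst v, snd v + b * g1 (fst v)) else v)" for v
    unfolding \<sigma>_def restr_map_def psi by simp
  have sig': "\<sigma>' v = (if v \<in> S2 then (fst v + a * g2 (snd v), snd v) else v)" for v
    unfolding \<sigma>'_def restr_map_def psi' by simp
  have dep1: "\<And>v w. fst v = fst w \<Longrightarrow> v \<in> S1 \<longleftrightarrow> w \<in> S1" unfolding S1_def by (rule xstrip_dep)
  have dep2: "\<And>v w. snd v = snd w \<Longrightarrow> v \<in> S2 \<longleftrightarrow> w \<in> S2" unfolding S2_def by (rule ystrip_dep)
  have bs: "bij \<sigma>" by (rule restr_bij_vert[OF sig dep1])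
  have bs': "bij \<sigma>'" by (rule restr_bij_horiz[OF sig' dep2])
  have out1: "\<sigma> v = v" if "v \<notin> S1" for v using that sig by simp
  have out2: "\<sigma>' v = v" if "v \<notin> S2" for v using that sig' by simp
  have in1: "\<sigma> v \<in> S1" if "v \<in> S1" for v using that sig dep1[of "\<sigma> v" v] by simp
  have in2: "\<sigma>' v \<in> S2" if "v \<in> S2" for v using that sig' dep2[of "\<sigma>' v" v] by simp
  have bt: "bij \<tau>" unfolding \<tau>_def
    using sY unfolding sympl_field_def by (intro flow_bij[OF smooth_lipschitz flY]) auto
  have bt': "bij \<tau>'" unfolding \<tau>'_def
    using sY' unfolding sympl_field_def by (intro flow_bij[OF smooth_lipschitz flY']) auto
  have injt: "inj \<tau>" using bt bij_is_inj by blast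
  have injt': "inj \<tau>'" using bt' bij_is_inj by blast
  have mem1: "\<exists>m::int. fst v - of_int m \<in> Iqr (-q1) r1" if "v \<in> S1" for v
    using that unfolding S1_def xstrip_def by blast
  have mem2: "\<exists>m::int. snd v - of_int m \<in> Iqr (-q2) r2" if "v \<in> S2" for v
    using that unfolding S2_def ystrip_def by blast
  have tS1: "\<tau> v = (fst v + c, snd v)" if vS: "v \<in> S1" for v
  proof -
    obtain m :: int where m: "fst v - of_int m \<in> Iqr (-q1) r1" using mem1[OF vS] by blast
    have "\<phi> 1 v = (fst v + c, snd v + 0)"
    proof (rule tau_x[OF flY Yc])
      fix t :: real assume t: "0 \<le> t" "t \<le> 1"
      show "\<bar>fst v + c * t - of_int m\<bar> < \<epsilon>"
      proof (cases "c = 0")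
        case True
        then show ?thesis using strip_abs[OF m qe1] by simp
      next
        case False
        then have "q1 = c" unfolding q1_def qr_def by simp
        then have "\<bar>(fst v - of_int m) + c * t\<bar> < \<epsilon>" using strip_path[OF _ _ t, of "fst v - of_int m" c r1] m qe1 by simp
        then show ?thesis by (simp add: algebra_simps)
      qed
    qed
    then show ?thesis unfolding \<tau>_def by simp
  qed
  have t'S1: "\<tau>' v = (fst v, snd v - d)" if vS: "v \<in> S1" for v
  proof -
    obtain m :: int where m: "fst v - of_int m \<in> Iqr (-q1) r1" using mem1[OF vS] by blast
    have "\<phi>' 1 v = (fst v + 0, snd v + - d)"
      by (rule tau_x[OF flY' Yd]) (use strip_abs[OF m qe1] in simp)
    then show ?thesis unfolding \<tau>'_def by simp
  qed
  have tS2: "\<tau> v = (fst v + c, snd v)" if vS: "v \<in> S2" for v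
  proof -
    obtain m :: int where m: "snd v - of_int m \<in> Iqr (-q2) r2" using mem2[OF vS] by blast
    have "\<phi> 1 v = (fst v + c, snd v + 0)"
      by (rule tau_y[OF flY Yc]) (use strip_abs[OF m qe2] in simp)
    then show ?thesis unfolding \<tau>_def by simp
  qed
  have t'S2: "\<tau>' (fst w, snd w + d) = w" if vS: "w \<in> S2" for w
  proof -
    obtain m :: int where m: "snd w - of_int m \<in> Iqr (-q2) r2" using mem2[OF vS] by blast
    have "\<phi>' 1 (fst w, snd w + d) = (fst (fst w, snd w + d) + 0, snd (fst w, snd w + d) + - d)"
    proof (rule tau_y[OF flY' Yd])
      fix t :: real assume t: "0 \<le> t" "t \<le> 1"
      show "\<bar>snd (fst w, snd w + d) + - d * t - of_int m\<bar> < \<epsilon>"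
      proof (cases "d = 0")
        case True
        then show ?thesis using strip_abs[OF m qe2] by simp
      next
        case False
        then have "q2 = d" unfolding q2_def qr_def by simp
        moreover have "0 \<le> 1 - t" "1 - t \<le> 1" using t by auto
        ultimately have "\<bar>(snd w - of_int m) + d * (1 - t)\<bar> < \<epsilon>"
          using strip_path[of "snd w - of_int m" d r2 \<epsilon> "1 - t"] m qe2 by simp
        then show ?thesis by (simp add: algebra_simps)
      qed
    qed
    then show ?thesis unfolding \<tau>'_def by simp
  qed
  define T where "T = inv \<tau>'"
  have bT: "bij T" unfolding T_def using bt' by (rule bij_imp_bij_inv)
  have iT: "inv T = \<tau>'" unfolding T_def using bt' by (rule inv_inv_eq)
  have TS2: "T w = (fst w, snd w + d)" if "w \<in> S2" for w
    unfolding T_def using t'S2[OF that] injt' by (metis inv_f_f)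
  have alt1: "(\<forall>v\<in>S1. \<tau> v = v) \<or> (\<forall>v\<in>S1. \<tau> v \<notin> S1)"
  proof (cases "c = 0")
    case True then show ?thesis using tS1 by simp
  next
    case False
    have q1c: "q1 = c" "r1 = Delta c d" using False unfolding q1_def r1_def qr_def by simp_all
    have "\<tau> v \<notin> S1" if v: "v \<in> S1" for v
    proof
      assume "\<tau> v \<in> S1"
      then obtain m1 :: int where m1: "fst v + c - of_int m1 \<in> Iqr (-c) r1"
        using mem1 tS1[OF v] q1c by force
      obtain m2 :: int where m2: "fst v - of_int m2 \<in> Iqr (-c) r1" using mem1[OF v] q1c by force
      have "r1 \<le> \<bar>c\<bar>" using q1c Delta_le_c[OF False] by simp
      moreover have "\<bar>c\<bar> < 1/4" "r1 < 1/4" using ce e1 Delta_le[OF ce de] q1c by auto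
      ultimately show False using strip_disj[OF m1 m2] by blast
    qed
    then show ?thesis by blast
  qed
  have P1: "\<sigma> ((\<tau> \<circ> inv \<sigma> \<circ> inv \<tau>) w) = (\<tau> \<circ> inv \<sigma> \<circ> inv \<tau>) (\<sigma> w)" for w
    by (rule commute_abstract[OF bt bs out1 in1 alt1])
  have alt2: "(\<forall>v\<in>S2. T v = v) \<or> (\<forall>v\<in>S2. T v \<notin> S2)"
  proof (cases "d = 0")
    case True then show ?thesis using TS2 by simp
  next
    case False
    have q2d: "q2 = d" "r2 = Delta c d" using False unfolding q2_def r2_def qr_def by (simp_all add: Delta_sym)
    have "T v \<notin> S2" if v: "v \<in> S2" for v
    proof
      assume "T v \<in> S2"
      then obtain m1 :: int where m1: "snd v + d - of_int m1 \<in> Iqr (-d) r2"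
        using mem2 TS2[OF v] q2d by force
      obtain m2 :: int where m2: "snd v - of_int m2 \<in> Iqr (-d) r2" using mem2[OF v] q2d by force
      have "r2 \<le> \<bar>d\<bar>" using q2d Delta_le_c[OF False, of c] Delta_sym by simp
      moreover have "\<bar>d\<bar> < 1/4" "r2 < 1/4" using de e1 Delta_le[OF ce de] q2d by auto
      ultimately show False using strip_disj[OF m1 m2] by blast
    qed
    then show ?thesis by blast
  qed
  have P2: "\<sigma>' ((inv \<tau>' \<circ> inv \<sigma>' \<circ> \<tau>') w) = (inv \<tau>' \<circ> inv \<sigma>' \<circ> \<tau>') (\<sigma>' w)" for w
  proof -
    have "\<sigma>' ((T \<circ> inv \<sigma>' \<circ> inv T) w) = (T \<circ> inv \<sigma>' \<circ> inv T) (\<sigma>' w)"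
      by (rule commute_abstract[OF bT bs' out2 in2 alt2])
    then show ?thesis unfolding iT by (simp add: T_def)
  qed
  have P3: "\<sigma> (\<tau>' v) = \<tau>' (\<sigma> v)" for v
  proof (cases "v \<in> S1")
    case True
    have a1: "\<tau>' v \<in> S1" using True dep1[of "\<tau>' v" v] t'S1[OF True] by simp
    have a2: "\<sigma> v \<in> S1" by (rule in1[OF True])
    show ?thesis using t'S1[OF a2] t'S1[OF True] sig[of v] sig[of "\<tau>' v"] True a1 by simp
  next
    case False
    have "\<tau>' v \<notin> S1"
    proof
      assume A: "\<tau>' v \<in> S1"
      define w where "w = (fst (\<tau>' v), snd (\<tau>' v) + d)"
      have wS: "w \<in> S1" using A dep1[of w "\<tau>' v"] unfolding w_def by simp
      have "\<tau>' w = \<tau>' v" using t'S1[OF wS] unfolding w_def by simp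
      then have "w = v" using injt' by (simp add: inj_eq)
      then show False using wS False by simp
    qed
    then show ?thesis using out1 False by simp
  qed
  have P4: "\<sigma>' (\<tau> v) = \<tau> (\<sigma>' v)" for v
  proof (cases "v \<in> S2")
    case True
    have a1: "\<tau> v \<in> S2" using True dep2[of "\<tau> v" v] tS2[OF True] by simp
    have a2: "\<sigma>' v \<in> S2" by (rule in2[OF True])
    show ?thesis using tS2[OF a2] tS2[OF True] sig'[of v] sig'[of "\<tau> v"] True a1 by simp
  next
    case False
    have "\<tau> v \<notin> S2"
    proof
      assume A: "\<tau> v \<in> S2"
      define w where "w = (fst (\<tau> v) - c, snd (\<tau> v))"
      have wS: "w \<in> S2" using A dep2[of w "\<tau> v"] unfolding w_def by simp
      have "\<tau> w = \<tau> v" using tS2[OF wS] unfolding w_def by simp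
      then have "w = v" using injt by (simp add: inj_eq)
      then show False using wS False by simp
    qed
    then show ?thesis using out2 False by simp
  qed
  have teq: "torus_eq x x" for x :: "real \<times> real" unfolding torus_eq_def in_Z2_def by simp
  have "commutes_T \<sigma> (\<tau> \<circ> inv \<sigma> \<circ> inv \<tau>)" unfolding commutes_T_def using P1 teq by simp
  moreover have "commutes_T \<sigma>' (inv \<tau>' \<circ> inv \<sigma>' \<circ> \<tau>')" unfolding commutes_T_def using P2 teq by simp
  moreover have "commutes_T \<sigma> \<tau>'" unfolding commutes_T_def using P3 teq by simp
  moreover have "commutes_T \<sigma>' \<tau>" unfolding commutes_T_def using P4 teq by simp
  ultimately show ?thesis
    unfolding Let_def \<tau>_def \<tau>'_def \<sigma>_def \<sigma>'_def S1_def S2_def q1_def r1_def q2_def r2_def by blast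
qed


end
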